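(* Let $G$ be a serial superedge with terminals $s=s_1,s_2,\dots,s_{k+1}=t$, i.e. an oriented serial superedge $(G,s,t)$ with principal subgraphs $(G_i,s_i,s_{i+1})$ for $1\le i\le k$, each $G_i$ non-serial. Suppose that for every $1\le i\le k$ there is a graph isomorphism $r_i:G_i\to G_{k-i+1}$ with $r_i(s_i)=s_{k-i+2}$ and $r_i(s_{i+1})=s_{k-i+1}$, and let $r:V(G)\to V(G)$ be the map whose restriction to $V(G_i)$ is $r_i$ for each $i$. Then $\mathrm{Aut}_{\mathrm{semi}}(G,\{s,t\})=\{\sigma,\ r\sigma:\sigma\in\mathrm{Aut}_{\mathrm{or}}(G,s,t)\}$. If no such family of isomorphisms $r_1,\dots,r_k$ exists, then $\mathrm{Aut}_{\mathrm{semi}}(G,\{s,t\})=\mathrm{Aut}_{\mathrm{or}}(G,s,t)$.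
   Context: All graphs are finite, simple and undirected. An oriented series-parallel graph is a triple $(G,s,t)$ where $G$ is a graph and $s\neq t$ are vertices, defined recursively: (i) $G$ is a single edge with vertex set $\{s,t\}$; or (ii) (serial superedge) there are $k\ge 2$ oriented series-parallel graphs $(G_1,s_1,t_1),\dots,(G_k,s_k,t_k)$ with $s_1=s$, $t_k=t$, $t_i=s_{i+1}$ for $1\le i<k$, $V(G_i)\cap V(G_{i+1})=\{s_{i+1}\}$, $V(G_i)\cap V(G_j)=\emptyset$ for $|i-j|\ge2$, and $G=G_1\cup\dots\cup G_k$; or (iii) (parallel superedge) there are $k\ge2$ oriented series-parallel graphs $(G_1,s,t),\dots,(G_k,s,t)$ with $V(G_i)\cap V(G_j)=\{s,t\}$ for $i\neq j$ and $G=G_1\cup\dots\cup G_k$. The $G_i$ are the principal subgraphs; a graph is non-serial if it is not a serial superedge. $\mathrm{Aut}_{\mathrm{or}}(G,s,t)$ is the group of automorphisms $\sigma$ of $G$ with $\sigma(s)=s$, $\sigma(t)=t$; $\mathrm{Aut}_{\mathrm{semi}}(G,\{s,t\})$ is the group of automorphisms $\sigma$ of $G$ with $\{\sigma(s),\sigma(t)\}=\{s,t\}$. *)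

theory Defs
  imports Main
begin

text \<open>A graph is a pair of a vertex set V and an edge set E of 2-element subsets.
  Oriented series-parallel graphs (V, E, s, t) are defined inductively; principal
  subgraphs are given as lists of vertex sets, edge sets, and (for serial
  superedges) the list of terminals s_1, ..., s_{k+1}.\<close>

inductive osp :: "'a set \<Rightarrow> 'a set set \<Rightarrow> 'a \<Rightarrow> 'a \<Rightarrow> bool" where
  edge: "s \<noteq> t \<Longrightarrow> osp {s, t} {{s, t}} s t"
| serial: "\<lbrakk> s \<noteq> t; length Vs \<ge> 2; length Es = length Vs; length ss = length Vs + 1;
            ss ! 0 = s; ss ! length Vs = t;
            \<forall>i < length Vs. osp (Vs ! i) (Es ! i) (ss ! i) (ss ! Suc i);
            \<forall>i. Suc i < length Vs \<longrightarrow> Vs ! i \<inter> Vs ! Suc i = {ss ! Suc i};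
            \<forall>i j. i < length Vs \<longrightarrow> j < length Vs \<longrightarrow> i + 2 \<le> j \<longrightarrow> Vs ! i \<inter> Vs ! j = {};
            V = (\<Union>i < length Vs. Vs ! i); E = (\<Union>i < length Vs. Es ! i) \<rbrakk>
           \<Longrightarrow> osp V E s t"
| parallel: "\<lbrakk> s \<noteq> t; length Vs \<ge> 2; length Es = length Vs;
              \<forall>i < length Vs. osp (Vs ! i) (Es ! i) s t;
              \<forall>i j. i < length Vs \<longrightarrow> j < length Vs \<longrightarrow> i \<noteq> j \<longrightarrow> Vs ! i \<inter> Vs ! j = {s, t};
              V = (\<Union>i < length Vs. Vs ! i); E = (\<Union>i < length Vs. Es ! i) \<rbrakk>
           \<Longrightarrow> osp V E s t"

definition serial_decomp :: "'a set \<Rightarrow> 'a set set \<Rightarrow> 'a \<Rightarrow> 'a \<Rightarrow> 'a set list \<Rightarrow> 'a set set list \<Rightarrow> 'a list \<Rightarrow> bool" where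
  "serial_decomp V E s t Vs Es ss \<longleftrightarrow>
     s \<noteq> t \<and> length Vs \<ge> 2 \<and> length Es = length Vs \<and> length ss = length Vs + 1 \<and>
     ss ! 0 = s \<and> ss ! length Vs = t \<and>
     (\<forall>i < length Vs. osp (Vs ! i) (Es ! i) (ss ! i) (ss ! Suc i)) \<and>
     (\<forall>i. Suc i < length Vs \<longrightarrow> Vs ! i \<inter> Vs ! Suc i = {ss ! Suc i}) \<and>
     (\<forall>i j. i < length Vs \<longrightarrow> j < length Vs \<longrightarrow> i + 2 \<le> j \<longrightarrow> Vs ! i \<inter> Vs ! j = {}) \<and>
     V = (\<Union>i < length Vs. Vs ! i) \<and> E = (\<Union>i < length Vs. Es ! i)"

definition is_serial :: "'a set \<Rightarrow> 'a set set \<Rightarrow> 'a \<Rightarrow> 'a \<Rightarrow> bool" where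
  "is_serial V E s t \<longleftrightarrow> (\<exists>Vs Es ss. serial_decomp V E s t Vs Es ss)"

definition graph_iso :: "'a set \<Rightarrow> 'a set set \<Rightarrow> 'a set \<Rightarrow> 'a set set \<Rightarrow> ('a \<Rightarrow> 'a) \<Rightarrow> bool" where
  "graph_iso V1 E1 V2 E2 f \<longleftrightarrow> bij_betw f V1 V2 \<and>
     (\<forall>x\<in>V1. \<forall>y\<in>V1. {x, y} \<in> E1 \<longleftrightarrow> {f x, f y} \<in> E2)"

text \<open>Automorphisms, as functions that are the identity outside V (so that they form a group
  under composition and sets of them can be compared extensionally).\<close>
definition graph_aut :: "'a set \<Rightarrow> 'a set set \<Rightarrow> ('a \<Rightarrow> 'a) \<Rightarrow> bool" where
  "graph_aut V E \<sigma> \<longleftrightarrow> graph_iso V E V E \<sigma> \<and> (\<forall>x. x \<notin> V \<longrightarrow> \<sigma> x = x)"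

definition Aut_or :: "'a set \<Rightarrow> 'a set set \<Rightarrow> 'a \<Rightarrow> 'a \<Rightarrow> ('a \<Rightarrow> 'a) set" where
  "Aut_or V E s t = {\<sigma>. graph_aut V E \<sigma> \<and> \<sigma> s = s \<and> \<sigma> t = t}"

definition Aut_semi :: "'a set \<Rightarrow> 'a set set \<Rightarrow> 'a \<Rightarrow> 'a \<Rightarrow> ('a \<Rightarrow> 'a) set" where
  "Aut_semi V E s t = {\<sigma>. graph_aut V E \<sigma> \<and> {\<sigma> s, \<sigma> t} = {s, t}}"

text \<open>Family r_1..r_k (0-indexed) of isomorphisms G_i -> G_{k-i+1} reversing terminals.\<close>
definition reversal_family :: "'a set list \<Rightarrow> 'a set set list \<Rightarrow> 'a list \<Rightarrow> ('a \<Rightarrow> 'a) list \<Rightarrow> bool" where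
  "reversal_family Vs Es ss rs \<longleftrightarrow> length rs = length Vs \<and>
     (\<forall>i < length Vs.
        graph_iso (Vs ! i) (Es ! i) (Vs ! (length Vs - 1 - i)) (Es ! (length Vs - 1 - i)) (rs ! i) \<and>
        (rs ! i) (ss ! i) = ss ! (length Vs - i) \<and>
        (rs ! i) (ss ! Suc i) = ss ! (length Vs - 1 - i))"

end

theory Submission
  imports Defs
begin

fun walk :: "'a set set \<Rightarrow> 'a list \<Rightarrow> bool" where
  "walk E [] = False"
| "walk E [x] = True"
| "walk E (x # y # p) = ({x, y} \<in> E \<and> walk E (y # p))"

definition pw :: "'a set set \<Rightarrow> 'a \<Rightarrow> 'a \<Rightarrow> 'a set \<Rightarrow> bool" where
  "pw E a b X \<longleftrightarrow> (\<exists>p. walk E p \<and> hd p = a \<and> last p = b \<and> set p \<inter> X = {})"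

lemma walk_nonempty: "walk E p \<Longrightarrow> p \<noteq> []"
  by (cases p) auto

lemma walk_append: "walk E p \<Longrightarrow> walk E q \<Longrightarrow> last p = hd q \<Longrightarrow> walk E (p @ tl q)"
proof (induction E p rule: walk.induct)
  case (2 E x)
  then show ?case by (cases q) auto
next
  case (3 E x y p)
  then show ?case by auto
qed auto

lemma walk_rev: "walk E p \<Longrightarrow> walk E (rev p)"
proof (induction E p rule: walk.induct)
  case (3 E x y p)
  have yx: "{y, x} \<in> E" using 3 by (metis insert_commute walk.simps(3))
  have "walk E (rev (y # p))" using 3 by simp
  moreover have "walk E [y, x]" using yx by simp
  ultimately have "walk E (rev (y # p) @ tl [y, x])"
    by (intro walk_append) auto
  then show ?case by simp
qed auto

lemma walk_mono: "walk E p \<Longrightarrow> E \<subseteq> E' \<Longrightarrow> walk E' p"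
  by (induction E p rule: walk.induct) auto

lemma walk_in: "\<forall>e\<in>E. e \<subseteq> V \<Longrightarrow> walk E p \<Longrightarrow> hd p \<in> V \<Longrightarrow> set p \<subseteq> V"
proof (induction E p rule: walk.induct)
  case (3 E x y p)
  then have "{x, y} \<subseteq> V" by (meson walk.simps(3))
  then have "y \<in> V" "x \<in> V" by auto
  moreover have "set (y # p) \<subseteq> V" using 3 \<open>y \<in> V\<close> by (metis list.sel(1) walk.simps(3))
  ultimately show ?case by simp
next
  case (2 E x)
  then show ?case by simp
next
  case 1
  then show ?case by simp
qed

lemma walk_map: "\<forall>x\<in>V. \<forall>y\<in>V. {x, y} \<in> E \<longrightarrow> {f x, f y} \<in> E \<Longrightarrow> walk E p \<Longrightarrow> set p \<subseteq> V
   \<Longrightarrow> walk E (map f p)"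
  by (induction E p rule: walk.induct) auto

lemma walk_cross: "walk E p \<Longrightarrow> hd p \<in> L \<Longrightarrow> last p \<notin> L \<Longrightarrow>
   \<exists>u w. {u, w} \<in> E \<and> u \<in> L \<and> w \<notin> L \<and> u \<in> set p"
proof (induction E p rule: walk.induct)
  case (3 E x y p)
  show ?case
  proof (cases "y \<in> L")
    case True
    then obtain u w where "{u, w} \<in> E" "u \<in> L" "w \<notin> L" "u \<in> set (y # p)"
      using 3 by auto
    then show ?thesis by auto
  next
    case False
    then show ?thesis using 3 by auto
  qed
qed auto

lemma pw_trans: "pw E a b X \<Longrightarrow> pw E b c X \<Longrightarrow> pw E a c X"
proof -
  assume "pw E a b X" "pw E b c X"
  then obtain p q where p: "walk E p" "hd p = a" "last p = b" "set p \<inter> X = {}"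
    and q: "walk E q" "hd q = b" "last q = c" "set q \<inter> X = {}"
    unfolding pw_def by blast
  have ne: "p \<noteq> []" "q \<noteq> []" using p q walk_nonempty by auto
  have "walk E (p @ tl q)" using p q walk_append by metis
  moreover have "hd (p @ tl q) = a" using ne p by simp
  moreover have "last (p @ tl q) = c"
  proof (cases "tl q = []")
    case True
    then have "q = [hd q]" using ne by (cases q) auto
    then show ?thesis using p q by (metis last_ConsL last_append True append_Nil2)
  next
    case False
    then have "last (tl q) = last q" using ne by (cases q) auto
    then show ?thesis using False q by simp
  qed
  moreover have "set (p @ tl q) \<inter> X = {}" using p q ne list.set_sel(2)[of q]
    by auto
  ultimately show ?thesis unfolding pw_def by blast
qed

lemma pw_sym: "pw E a b X \<Longrightarrow> pw E b a X"
proof -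
  assume "pw E a b X"
  then obtain p where p: "walk E p" "hd p = a" "last p = b" "set p \<inter> X = {}"
    unfolding pw_def by blast
  have "p \<noteq> []" using p walk_nonempty by auto
  then have "walk E (rev p) \<and> hd (rev p) = b \<and> last (rev p) = a \<and> set (rev p) \<inter> X = {}"
    using p walk_rev by (simp add: hd_rev last_rev)
  then show ?thesis unfolding pw_def by blast
qed

lemma pw_refl: "a \<notin> X \<Longrightarrow> pw E a a X"
  unfolding pw_def by (rule exI[of _ "[a]"]) auto

lemma pw_mono: "pw E a b X \<Longrightarrow> E \<subseteq> E' \<Longrightarrow> Y \<subseteq> X \<Longrightarrow> pw E' a b Y"
proof -
  assume a: "pw E a b X" "E \<subseteq> E'" "Y \<subseteq> X"
  then obtain p where p: "walk E p" "hd p = a" "last p = b" "set p \<inter> X = {}"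
    unfolding pw_def by blast
  then have "walk E' p" "set p \<inter> Y = {}" using a walk_mono by blast+
  then show ?thesis using p unfolding pw_def by blast
qed

lemma pw_lift: "pw E a b X \<Longrightarrow> \<forall>e\<in>E. e \<subseteq> V \<Longrightarrow> a \<in> V \<Longrightarrow> E \<subseteq> E' \<Longrightarrow> Y \<inter> V \<subseteq> X
   \<Longrightarrow> pw E' a b Y"
proof -
  assume a: "pw E a b X" "\<forall>e\<in>E. e \<subseteq> V" "a \<in> V" "E \<subseteq> E'" "Y \<inter> V \<subseteq> X"
  then obtain p where p: "walk E p" "hd p = a" "last p = b" "set p \<inter> X = {}"
    unfolding pw_def by blast
  have "set p \<subseteq> V" using walk_in a p by metis
  then have "set p \<inter> Y = {}" using a p by blast
  then show ?thesis using p walk_mono a unfolding pw_def by blast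
qed

lemma pw_hd: "\<not> pw E a b {a}"
  unfolding pw_def using walk_nonempty by fastforce

lemma pw_last: "\<not> pw E a b {b}"
  unfolding pw_def using walk_nonempty by fastforce


lemma osp_basic: "osp V E s t \<Longrightarrow> s \<in> V \<and> t \<in> V \<and> s \<noteq> t \<and> finite V \<and> (\<forall>e\<in>E. e \<subseteq> V \<and> card e = 2)"
proof (induction rule: osp.induct)
  case (edge s t)
  then show ?case by auto
next
  case (serial s t Vs Es ss V E)
  have k0: "0 < length Vs" using serial(2) by linarith
  have "s \<in> Vs ! 0" using serial.IH k0 serial(5) by auto
  moreover have "t \<in> Vs ! (length Vs - 1)"
  proof -
    have "length Vs - 1 < length Vs" "Suc (length Vs - 1) = length Vs" using k0 by auto
    then show ?thesis using serial.IH serial(6) by metis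
  qed
  ultimately have "s \<in> V" "t \<in> V" using serial.hyps(9) k0 by auto
  moreover have "finite V" using serial.IH serial.hyps(9) by auto
  moreover have "\<forall>e\<in>E. e \<subseteq> V \<and> card e = 2"
  proof
    fix e assume "e \<in> E"
    then obtain i where i: "i < length Vs" "e \<in> Es ! i" using serial.hyps(10) by auto
    then have "e \<subseteq> Vs ! i \<and> card e = 2" using serial.IH by blast
    then show "e \<subseteq> V \<and> card e = 2" using i serial.hyps(9) by auto
  qed
  ultimately show ?case using serial(1) by blast
next
  case (parallel s t Vs Es V E)
  have k0: "0 < length Vs" using parallel(2) by linarith
  have "s \<in> V" "t \<in> V" using parallel.IH[rule_format, OF k0] parallel.hyps(5) k0 by auto
  moreover have "finite V" using parallel.IH parallel.hyps(5) by auto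
  moreover have "\<forall>e\<in>E. e \<subseteq> V \<and> card e = 2"
  proof
    fix e assume "e \<in> E"
    then obtain i where i: "i < length Vs" "e \<in> Es ! i" using parallel.hyps(6) by auto
    then have "e \<subseteq> Vs ! i \<and> card e = 2" using parallel.IH by blast
    then show "e \<subseteq> V \<and> card e = 2" using i parallel.hyps(5) by auto
  qed
  ultimately show ?case using parallel(1) by blast
qed

lemma edge_ne: "card {x, y} = 2 \<Longrightarrow> x \<noteq> y"
  by auto


definition good :: "'a set \<Rightarrow> 'a set set \<Rightarrow> 'a \<Rightarrow> 'a \<Rightarrow> bool" where
  "good V E s t \<longleftrightarrow> pw E s t {} \<and> (\<forall>x\<in>V. (x \<noteq> t \<longrightarrow> pw E s x {t}) \<and> (x \<noteq> s \<longrightarrow> pw E t x {s}))"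

lemma good_conn_s: "good V E s t \<Longrightarrow> x \<in> V \<Longrightarrow> pw E s x {}"
proof -
  assume g: "good V E s t" "x \<in> V"
  show ?thesis
  proof (cases "x = t")
    case True
    have "pw E s t {}" using g(1) unfolding good_def by (rule conjunct1)
    then show ?thesis using True by simp
  next
    case False
    then have "pw E s x {t}" using g unfolding good_def by blast
    then show ?thesis using pw_mono[of E s x "{t}" E "{}"] by simp
  qed
qed

lemma good_conn_t: "good V E s t \<Longrightarrow> x \<in> V \<Longrightarrow> pw E t x {}"
proof -
  assume g: "good V E s t" "x \<in> V"
  show ?thesis
  proof (cases "x = s")
    case True
    have "pw E s t {}" using g(1) unfolding good_def by (rule conjunct1)
    then show ?thesis using True pw_sym[of E s t "{}"] by simp
  next
    case False
    then have "pw E t x {s}" using g unfolding good_def by blast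
    then show ?thesis using pw_mono[of E t x "{s}" E "{}"] by simp
  qed
qed

locale sdec =
  fixes V :: "'a set" and E :: "'a set set" and s t :: 'a
    and Vs :: "'a set list" and Es :: "'a set set list" and ss :: "'a list"
  assumes sd: "serial_decomp V E s t Vs Es ss"
begin

abbreviation "k \<equiv> length Vs"

lemma sdu: "s \<noteq> t \<and> length Vs \<ge> 2 \<and> length Es = length Vs \<and> length ss = length Vs + 1 \<and>
     ss ! 0 = s \<and> ss ! length Vs = t \<and>
     (\<forall>i < length Vs. osp (Vs ! i) (Es ! i) (ss ! i) (ss ! Suc i)) \<and>
     (\<forall>i. Suc i < length Vs \<longrightarrow> Vs ! i \<inter> Vs ! Suc i = {ss ! Suc i}) \<and>
     (\<forall>i j. i < length Vs \<longrightarrow> j < length Vs \<longrightarrow> i + 2 \<le> j \<longrightarrow> Vs ! i \<inter> Vs ! j = {}) \<and>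
     V = (\<Union>i < length Vs. Vs ! i) \<and> E = (\<Union>i < length Vs. Es ! i)"
  using sd unfolding serial_decomp_def .

lemma st: "s \<noteq> t" using sdu by (elim conjE) assumption
lemma k2: "2 \<le> k" using sdu by (elim conjE) assumption
lemma kpos: "0 < k" using k2 by linarith
lemma lenEs: "length Es = k" using sdu by (elim conjE) assumption
lemma lenss: "length ss = k + 1" using sdu by (elim conjE) assumption
lemma ss0: "ss ! 0 = s" using sdu by (elim conjE) assumption
lemma ssk: "ss ! k = t" using sdu by (elim conjE) assumption
lemma comp_all: "\<forall>i < length Vs. osp (Vs ! i) (Es ! i) (ss ! i) (ss ! Suc i)"
  using sdu by (elim conjE) assumption
lemma comp: "i < k \<Longrightarrow> osp (Vs ! i) (Es ! i) (ss ! i) (ss ! Suc i)"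
  using comp_all by blast
lemma isucc_all: "\<forall>i. Suc i < length Vs \<longrightarrow> Vs ! i \<inter> Vs ! Suc i = {ss ! Suc i}"
  using sdu by (elim conjE) assumption
lemma isucc: "Suc i < k \<Longrightarrow> Vs ! i \<inter> Vs ! Suc i = {ss ! Suc i}"
  using isucc_all by blast
lemma ifar_all: "\<forall>i j. i < length Vs \<longrightarrow> j < length Vs \<longrightarrow> i + 2 \<le> j \<longrightarrow> Vs ! i \<inter> Vs ! j = {}"
  using sdu by (elim conjE) assumption
lemma ifar: "i < k \<Longrightarrow> j < k \<Longrightarrow> i + 2 \<le> j \<Longrightarrow> Vs ! i \<inter> Vs ! j = {}"
  using ifar_all by blast
lemma Vdef: "V = (\<Union>i < k. Vs ! i)" using sdu by (elim conjE) assumption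
lemma Edef: "E = (\<Union>i < k. Es ! i)" using sdu by (elim conjE) assumption

lemma comp_basic: "i < k \<Longrightarrow> ss ! i \<in> Vs ! i \<and> ss ! Suc i \<in> Vs ! i \<and> ss ! i \<noteq> ss ! Suc i
   \<and> finite (Vs ! i) \<and> (\<forall>e\<in>Es ! i. e \<subseteq> Vs ! i \<and> card e = 2)"
  using osp_basic[OF comp] by blast

lemma Es_sub: "i < k \<Longrightarrow> Es ! i \<subseteq> E" using Edef by auto
lemma Vs_sub: "i < k \<Longrightarrow> Vs ! i \<subseteq> V" using Vdef by auto

lemma inter2: "x \<in> Vs ! a \<Longrightarrow> x \<in> Vs ! b \<Longrightarrow> a < b \<Longrightarrow> b < k \<Longrightarrow> b = Suc a \<and> x = ss ! b"
proof -
  assume a: "x \<in> Vs ! a" "x \<in> Vs ! b" "a < b" "b < k"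
  have "\<not> a + 2 \<le> b"
  proof
    assume "a + 2 \<le> b"
    then have "Vs ! a \<inter> Vs ! b = {}" using ifar a by simp
    then show False using a by blast
  qed
  then have b: "b = Suc a" using a by simp
  then have "Vs ! a \<inter> Vs ! b = {ss ! b}" using isucc a by simp
  then show ?thesis using a b by blast
qed

lemma ss_distinct: "i < j \<Longrightarrow> j \<le> k \<Longrightarrow> ss ! i \<noteq> ss ! j"
proof
  assume a: "i < j" "j \<le> k" "ss ! i = ss ! j"
  show False
  proof (cases "j = Suc i")
    case True
    then show ?thesis using comp_basic[of i] a by simp
  next
    case False
    have i1: "ss ! i \<in> Vs ! i" using comp_basic[of i] a by simp
    have j1: "ss ! j \<in> Vs ! (j - 1)" using comp_basic[of "j - 1"] a by simp
    have "j - 1 = Suc i \<and> ss ! i = ss ! (j - 1)"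
      using inter2[of "ss ! i" i "j - 1"] i1 j1 a False by simp
    then show False using comp_basic[of i] a by simp
  qed
qed

lemma ss_in: "j \<le> k \<Longrightarrow> l < k \<Longrightarrow> ss ! j \<in> Vs ! l \<Longrightarrow> l = j \<or> Suc l = j"
proof (rule ccontr)
  assume a: "j \<le> k" "l < k" "ss ! j \<in> Vs ! l" and nn: "\<not> (l = j \<or> Suc l = j)"
  have lj: "l \<noteq> j" "Suc l \<noteq> j" using nn by auto
  show False
  proof (cases "j = 0")
    case True
    have "ss ! 0 \<in> Vs ! 0" using comp_basic[OF kpos] by blast
    then have x0: "ss ! j \<in> Vs ! 0" using True by simp
    have l0: "0 < l" using lj True by simp
    have "l = Suc 0 \<and> ss ! j = ss ! l" using inter2[OF x0 a(3) l0 a(2)] .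
    moreover have "ss ! 0 \<noteq> ss ! 1" using ss_distinct[of 0 1] k2 by simp
    ultimately show False using True by simp
  next
    case False
    note j0 = False
    have jm: "j - 1 < k" "Suc (j - 1) = j" using a j0 by auto
    have j1: "ss ! j \<in> Vs ! (j - 1)" using comp_basic[OF jm(1)] jm(2) by simp
    show False
    proof (cases "l < j - 1")
      case True
      have "j - 1 = Suc l \<and> ss ! j = ss ! (j - 1)" using inter2[OF a(3) j1 True jm(1)] .
      then have "ss ! j = ss ! (j - 1)" by blast
      moreover have "j - 1 < j" using j0 by simp
      then have "ss ! (j - 1) \<noteq> ss ! j" using ss_distinct[of "j - 1" j] a(1) by blast
      ultimately show False by simp
    next
      case False
      have "l \<noteq> j - 1" using lj jm(2) by auto
      then have jl: "j - 1 < l" using False by simp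
      have "l = Suc (j - 1) \<and> ss ! j = ss ! l" using inter2[OF j1 a(3) jl a(2)] .
      then have "l = j" using jm(2) by simp
      then show False using lj by simp
    qed
  qed
qed

lemma edges: "\<forall>e\<in>E. e \<subseteq> V"
proof
  fix e assume "e \<in> E"
  then obtain i where "i < k" "e \<in> Es ! i" using Edef by auto
  then show "e \<subseteq> V" using comp_basic[of i] Vs_sub[of i] by blast
qed

lemma finV: "finite V" using Vdef comp_basic by auto

lemma edge_comp: "{x, y} \<in> E \<Longrightarrow> \<exists>m<k. {x, y} \<in> Es ! m \<and> x \<in> Vs ! m \<and> y \<in> Vs ! m \<and> x \<noteq> y"
proof -
  assume "{x, y} \<in> E"
  then obtain m where m: "m < k" "{x, y} \<in> Es ! m" using Edef by auto
  have "\<forall>e\<in>Es ! m. e \<subseteq> Vs ! m \<and> card e = 2" using comp_basic[OF m(1)] by blast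
  then have "{x, y} \<subseteq> Vs ! m" "card {x, y} = 2" using m(2) by blast+
  moreover have "x \<noteq> y" using edge_ne[OF calculation(2)] .
  ultimately show ?thesis using m by blast
qed

lemma concat: "a < b \<Longrightarrow> (\<forall>l. a \<le> l \<longrightarrow> l < b \<longrightarrow> pw E (ss ! l) (ss ! Suc l) X)
   \<Longrightarrow> pw E (ss ! a) (ss ! b) X"
proof (induction b)
  case 0
  then show ?case by simp
next
  case (Suc b)
  show ?case
  proof (cases "a = b")
    case True
    then show ?thesis using Suc.prems by simp
  next
    case False
    then have "pw E (ss ! a) (ss ! b) X" using Suc by simp
    moreover have "pw E (ss ! b) (ss ! Suc b) X" using Suc.prems False by simp
    ultimately show ?thesis by (rule pw_trans)
  qed
qed

lemma comp_lift: "l < k \<Longrightarrow> pw (Es ! l) a b X \<Longrightarrow> a \<in> Vs ! l \<Longrightarrow> Y \<inter> Vs ! l \<subseteq> X \<Longrightarrow> pw E a b Y"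
proof -
  assume a: "l < k" "pw (Es ! l) a b X" "a \<in> Vs ! l" "Y \<inter> Vs ! l \<subseteq> X"
  have "\<forall>e\<in>Es ! l. e \<subseteq> Vs ! l" using comp_basic[OF a(1)] by blast
  then show ?thesis using pw_lift[OF a(2) _ a(3) Es_sub[OF a(1)] a(4)] by blast
qed

lemma comp_conn_s: "l < k \<Longrightarrow> good (Vs ! l) (Es ! l) (ss ! l) (ss ! Suc l) \<Longrightarrow> x \<in> Vs ! l
   \<Longrightarrow> Y \<inter> Vs ! l = {} \<Longrightarrow> pw E (ss ! l) x Y"
proof -
  assume a: "l < k" "good (Vs ! l) (Es ! l) (ss ! l) (ss ! Suc l)" "x \<in> Vs ! l" "Y \<inter> Vs ! l = {}"
  have "pw (Es ! l) (ss ! l) x {}" using good_conn_s[OF a(2) a(3)] .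
  moreover have "ss ! l \<in> Vs ! l" using comp_basic[OF a(1)] by blast
  ultimately show ?thesis using comp_lift[OF a(1)] a(4) by blast
qed

lemma comp_conn_t: "l < k \<Longrightarrow> good (Vs ! l) (Es ! l) (ss ! l) (ss ! Suc l) \<Longrightarrow> x \<in> Vs ! l
   \<Longrightarrow> Y \<inter> Vs ! l = {} \<Longrightarrow> pw E (ss ! Suc l) x Y"
proof -
  assume a: "l < k" "good (Vs ! l) (Es ! l) (ss ! l) (ss ! Suc l)" "x \<in> Vs ! l" "Y \<inter> Vs ! l = {}"
  have "pw (Es ! l) (ss ! Suc l) x {}" using good_conn_t[OF a(2) a(3)] .
  moreover have "ss ! Suc l \<in> Vs ! l" using comp_basic[OF a(1)] by blast
  ultimately show ?thesis using comp_lift[OF a(1)] a(4) by blast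
qed

lemma good_serial:
  assumes g: "\<forall>i<k. good (Vs ! i) (Es ! i) (ss ! i) (ss ! Suc i)"
  shows "good V E s t"
proof -
  have cc: "pw E (ss ! l) (ss ! Suc l) {}" if "l < k" for l
  proof -
    have "ss ! Suc l \<in> Vs ! l" using comp_basic[OF that] by blast
    then show ?thesis using comp_conn_s[OF that] g that by blast
  qed
  have c1: "pw E (ss ! 0) (ss ! k) {}"
    by (rule concat) (use cc kpos in auto)
  then have c1: "pw E s t {}" using ss0 ssk by simp
  have c2: "pw E s x {t}" if x: "x \<in> V" "x \<noteq> t" for x
  proof -
    obtain i where i: "i < k" "x \<in> Vs ! i" using x Vdef by auto
    have p1: "pw E s (ss ! i) {t}"
    proof (cases "i = 0")
      case True
      then show ?thesis using ss0 st pw_refl by (metis singletonD)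
    next
      case False
      have st1: "pw E (ss ! l) (ss ! Suc l) {t}" if l: "0 \<le> l" "l < i" for l
      proof -
        have lk: "l < k" using l i by simp
        have "t \<notin> Vs ! l"
        proof
          assume "t \<in> Vs ! l"
          then have "l = k \<or> Suc l = k" using ss_in[of k l] ssk lk by simp
          then show False using l i by simp
        qed
        then have "{t} \<inter> Vs ! l = {}" by simp
        moreover have "ss ! Suc l \<in> Vs ! l" using comp_basic[OF lk] by blast
        ultimately show ?thesis using comp_conn_s[OF lk] g lk by blast
      qed
      have "pw E (ss ! 0) (ss ! i) {t}"
        by (rule concat) (use st1 False in auto)
      then show ?thesis using ss0 by simp
    qed
    have p2: "pw E (ss ! i) x {t}"
    proof (cases "t \<in> Vs ! i")
      case True
      then have "i = k \<or> Suc i = k" using ss_in[of k i] ssk i by simp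
      then have si: "ss ! Suc i = t" using i ssk by auto
      then have "pw (Es ! i) (ss ! i) x {ss ! Suc i}" using g i x unfolding good_def by blast
      moreover have "ss ! i \<in> Vs ! i" using comp_basic[OF i(1)] by blast
      ultimately show ?thesis using comp_lift[OF i(1)] si by blast
    next
      case False
      then have "{t} \<inter> Vs ! i = {}" by simp
      then show ?thesis using comp_conn_s[OF i(1)] g i by blast
    qed
    show ?thesis using pw_trans[OF p1 p2] .
  qed
  have c3: "pw E t x {s}" if x: "x \<in> V" "x \<noteq> s" for x
  proof -
    obtain i where i: "i < k" "x \<in> Vs ! i" using x Vdef by auto
    have p1: "pw E t (ss ! Suc i) {s}"
    proof (cases "Suc i = k")
      case True
      then show ?thesis using ssk st pw_refl by (metis singletonD)
    next
      case False
      have st1: "pw E (ss ! l) (ss ! Suc l) {s}" if l: "Suc i \<le> l" "l < k" for l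
      proof -
        have "s \<notin> Vs ! l"
        proof
          assume "s \<in> Vs ! l"
          then have "l = 0 \<or> Suc l = 0" using ss_in[of 0 l] ss0 l by simp
          then show False using l by simp
        qed
        then have "{s} \<inter> Vs ! l = {}" by simp
        moreover have "ss ! Suc l \<in> Vs ! l" using comp_basic[OF l(2)] by blast
        ultimately show ?thesis using comp_conn_s[OF l(2)] g l by blast
      qed
      have "pw E (ss ! Suc i) (ss ! k) {s}"
        by (rule concat) (use st1 False i in auto)
      then have "pw E (ss ! k) (ss ! Suc i) {s}" by (rule pw_sym)
      then show ?thesis using ssk by simp
    qed
    have p2: "pw E (ss ! Suc i) x {s}"
    proof (cases "s \<in> Vs ! i")
      case True
      then have "i = 0 \<or> Suc i = 0" using ss_in[of 0 i] ss0 i by simp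
      then have si: "ss ! i = s" using ss0 by auto
      then have "pw (Es ! i) (ss ! Suc i) x {ss ! i}" using g i x unfolding good_def by blast
      moreover have "ss ! Suc i \<in> Vs ! i" using comp_basic[OF i(1)] by blast
      ultimately show ?thesis using comp_lift[OF i(1)] si by blast
    next
      case False
      then have "{s} \<inter> Vs ! i = {}" by simp
      then show ?thesis using comp_conn_t[OF i(1)] g i by blast
    qed
    show ?thesis using pw_trans[OF p1 p2] .
  qed
  show ?thesis unfolding good_def using c1 c2 c3 by blast
qed

end


lemma pw_edge: "{a, b} \<in> E \<Longrightarrow> a \<notin> X \<Longrightarrow> b \<notin> X \<Longrightarrow> pw E a b X"
  unfolding pw_def by (rule exI[of _ "[a, b]"]) auto

lemma osp_good: "osp V E s t \<Longrightarrow> good V E s t"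
proof (induction rule: osp.induct)
  case (edge s t)
  have "pw {{s, t}} s t {}" by (rule pw_edge) auto
  moreover have "pw {{s, t}} s s {t}" using edge pw_refl by (metis singletonD)
  moreover have "pw {{s, t}} t t {s}" using edge pw_refl by (metis singletonD)
  ultimately show ?case unfolding good_def by auto
next
  case (serial s t Vs Es ss V E)
  have co: "\<forall>i<length Vs. osp (Vs ! i) (Es ! i) (ss ! i) (ss ! Suc i)" using serial.IH by blast
  have sd: "serial_decomp V E s t Vs Es ss"
    unfolding serial_decomp_def using serial.hyps co by (intro conjI) assumption+
  interpret sdec V E s t Vs Es ss by (rule sdec.intro[OF sd])
  have "\<forall>i<length Vs. good (Vs ! i) (Es ! i) (ss ! i) (ss ! Suc i)" using serial.IH by blast
  then show ?case by (rule good_serial)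
next
  case (parallel s t Vs Es V E)
  have k0: "0 < length Vs" using parallel.hyps(2) by linarith
  have sub: "Es ! i \<subseteq> E" if "i < length Vs" for i using parallel.hyps(6) that by auto
  have c1: "pw E s t {}"
  proof -
    have "good (Vs ! 0) (Es ! 0) s t" using parallel.IH k0 by blast
    then have "pw (Es ! 0) s t {}" unfolding good_def by (rule conjunct1)
    then show ?thesis using pw_mono[OF _ sub[OF k0] order_refl] by blast
  qed
  have c2: "(x \<noteq> t \<longrightarrow> pw E s x {t}) \<and> (x \<noteq> s \<longrightarrow> pw E t x {s})" if x: "x \<in> V" for x
  proof -
    obtain i where i: "i < length Vs" "x \<in> Vs ! i" using x parallel.hyps(5) by auto
    have "good (Vs ! i) (Es ! i) s t" using parallel.IH i by blast
    then have "(x \<noteq> t \<longrightarrow> pw (Es ! i) s x {t}) \<and> (x \<noteq> s \<longrightarrow> pw (Es ! i) t x {s})"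
      using i unfolding good_def by blast
    then show ?thesis using pw_mono[OF _ sub[OF i(1)] order_refl] by blast
  qed
  show ?case unfolding good_def using c1 c2 by blast
qed

lemma nonserial_avoid: "osp V E a b \<Longrightarrow> \<not> is_serial V E a b \<Longrightarrow> v \<noteq> a \<Longrightarrow> v \<noteq> b \<Longrightarrow> pw E a b {v}"
proof (erule osp.cases)
  fix s t assume "V = {s, t}" "E = {{s, t}}" "a = s" "b = t" "v \<noteq> a" "v \<noteq> b"
  then show "pw E a b {v}" by (intro pw_edge) auto
next
  fix s t Vs Es ss V' E'
  assume h: "V = V'" "E = E'" "a = s" "b = t" "s \<noteq> t" "2 \<le> length Vs" "length Es = length Vs"
    "length ss = length Vs + 1" "ss ! 0 = s" "ss ! length Vs = t"
    "\<forall>i<length Vs. osp (Vs ! i) (Es ! i) (ss ! i) (ss ! Suc i)"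
    "\<forall>i. Suc i < length Vs \<longrightarrow> Vs ! i \<inter> Vs ! Suc i = {ss ! Suc i}"
    "\<forall>i j. i < length Vs \<longrightarrow> j < length Vs \<longrightarrow> i + 2 \<le> j \<longrightarrow> Vs ! i \<inter> Vs ! j = {}"
    "V' = (\<Union>i<length Vs. Vs ! i)" "E' = (\<Union>i<length Vs. Es ! i)"
    and ns: "\<not> is_serial V E a b"
  have "serial_decomp V' E' s t Vs Es ss" unfolding serial_decomp_def using h(5-15) by (intro conjI) assumption+
  then have "serial_decomp V E a b Vs Es ss" using h(1-4) by simp
  then show "pw E a b {v}" using ns unfolding is_serial_def by blast
next
  fix s t Vs Es V' E'
  assume h: "V = V'" "E = E'" "a = s" "b = t" "s \<noteq> t" "2 \<le> length Vs" "length Es = length Vs"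
    "\<forall>i<length Vs. osp (Vs ! i) (Es ! i) s t"
    "\<forall>i j. i < length Vs \<longrightarrow> j < length Vs \<longrightarrow> i \<noteq> j \<longrightarrow> Vs ! i \<inter> Vs ! j = {s, t}"
    "V' = (\<Union>i<length Vs. Vs ! i)" "E' = (\<Union>i<length Vs. Es ! i)"
    and v: "v \<noteq> a" "v \<noteq> b"
  have "\<exists>i<length Vs. v \<notin> Vs ! i"
  proof (rule ccontr)
    assume "\<not> ?thesis"
    moreover have l: "0 < length Vs" "1 < length Vs" using h(6) by linarith+
    ultimately have "v \<in> Vs ! 0 \<inter> Vs ! 1" by blast
    moreover have "Vs ! 0 \<inter> Vs ! 1 = {s, t}" using h(9) l by blast
    ultimately have "v \<in> {s, t}" by blast
    then show False using v h by auto
  qed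
  then obtain i where i: "i < length Vs" "v \<notin> Vs ! i" by blast
  have o: "osp (Vs ! i) (Es ! i) s t" using h i by blast
  have "pw (Es ! i) s t {}" using osp_good[OF o] unfolding good_def by blast
  moreover have "\<forall>e\<in>Es ! i. e \<subseteq> Vs ! i" "s \<in> Vs ! i" using osp_basic[OF o] by blast+
  moreover have "Es ! i \<subseteq> E" using h i by auto
  ultimately show "pw E a b {v}" using pw_lift[of "Es ! i" s t "{}" "Vs ! i" E "{v}"] i h by blast
qed


context sdec
begin

lemma gcomp: "i < k \<Longrightarrow> good (Vs ! i) (Es ! i) (ss ! i) (ss ! Suc i)"
  using osp_good[OF comp] .

lemma gcomp_s: "i < k \<Longrightarrow> x \<in> Vs ! i \<Longrightarrow> x \<noteq> ss ! Suc i \<Longrightarrow> pw (Es ! i) (ss ! i) x {ss ! Suc i}"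
  using gcomp[of i] unfolding good_def by blast

lemma gcomp_t: "i < k \<Longrightarrow> x \<in> Vs ! i \<Longrightarrow> x \<noteq> ss ! i \<Longrightarrow> pw (Es ! i) (ss ! Suc i) x {ss ! i}"
  using gcomp[of i] unfolding good_def by blast

lemma ss_neq: "i \<le> k \<Longrightarrow> j \<le> k \<Longrightarrow> i \<noteq> j \<Longrightarrow> ss ! i \<noteq> ss ! j"
proof -
  assume a: "i \<le> k" "j \<le> k" "i \<noteq> j"
  show ?thesis
  proof (cases "i < j")
    case True
    then show ?thesis using ss_distinct a by blast
  next
    case False
    then have "j < i" using a by simp
    then show ?thesis using ss_distinct[of j i] a by auto
  qed
qed

lemma ss_Vs: "j \<le> k \<Longrightarrow> 0 < j \<Longrightarrow> ss ! j \<in> Vs ! (j - 1)"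
  using comp_basic[of "j - 1"] by simp

lemma ss_Vs2: "j < k \<Longrightarrow> ss ! j \<in> Vs ! j"
  using comp_basic[of j] by simp

lemma cut:
  assumes c: "0 < c" "c < k" and p: "walk E p" and h: "hd p \<in> Vs ! l" "l < c"
    and lst: "last p \<in> Vs ! m" "c \<le> m" "m < k"
  shows "ss ! c \<in> set p"
proof -
  define L where "L = (\<Union>l'<c. Vs ! l')"
  have hL: "hd p \<in> L" using h unfolding L_def by auto
  have ne: "p \<noteq> []" using p walk_nonempty by auto
  show ?thesis
  proof (cases "last p \<in> L")
    case True
    then obtain l' where l': "l' < c" "last p \<in> Vs ! l'" unfolding L_def by auto
    then have "m = Suc l' \<and> last p = ss ! m" using inter2[of "last p" l' m] lst by simp
    moreover have "m = c" using calculation l' lst by linarith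
    ultimately have "last p = ss ! c" by simp
    then show ?thesis using ne last_in_set by metis
  next
    case False
    then obtain u w where uw: "{u, w} \<in> E" "u \<in> L" "w \<notin> L" "u \<in> set p"
      using walk_cross[OF p hL] by blast
    obtain m' where m': "m' < k" "u \<in> Vs ! m'" "w \<in> Vs ! m'" using edge_comp[OF uw(1)] by blast
    have "\<not> m' < c" using m' uw(3) unfolding L_def by auto
    moreover obtain l'' where l'': "l'' < c" "u \<in> Vs ! l''" using uw(2) unfolding L_def by auto
    ultimately have "m' = Suc l'' \<and> u = ss ! m'" using inter2[of u l'' m'] m' by simp
    moreover have "m' = c" using calculation l'' \<open>\<not> m' < c\<close> by linarith
    ultimately have "u = ss ! c" by simp
    then show ?thesis using uw by simp
  qed
qed

lemma cut_sep:
  assumes "0 < c" "c < k" "a \<in> Vs ! l" "l < c" "b \<in> Vs ! m" "c \<le> m" "m < k"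
  shows "\<not> pw E a b {ss ! c}"
proof
  assume "pw E a b {ss ! c}"
  then obtain p where p: "walk E p" "hd p = a" "last p = b" "ss ! c \<notin> set p"
    unfolding pw_def by blast
  then show False using cut[OF assms(1,2) p(1), of l m] assms by simp
qed

lemma sep_gen:
  assumes ab: "a \<le> b" "b \<le> k" "i \<le> k"
  shows "(\<not> pw E (ss ! a) (ss ! b) {ss ! i}) = (a \<le> i \<and> i \<le> b)"
proof
  assume n: "\<not> pw E (ss ! a) (ss ! b) {ss ! i}"
  show "a \<le> i \<and> i \<le> b"
  proof (rule ccontr)
    assume out: "\<not> (a \<le> i \<and> i \<le> b)"
    have "pw E (ss ! a) (ss ! b) {ss ! i}"
    proof (cases "a = b")
      case True
      then have "ss ! a \<noteq> ss ! i" using ss_neq[of a i] ab out by auto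
      then show ?thesis using True pw_refl by (metis singletonD)
    next
      case False
      have st: "pw E (ss ! l) (ss ! Suc l) {ss ! i}" if l: "a \<le> l" "l < b" for l
      proof -
        have lk: "l < k" using l ab by simp
        have "ss ! i \<notin> Vs ! l"
        proof
          assume "ss ! i \<in> Vs ! l"
          then have "l = i \<or> Suc l = i" using ss_in[of i l] ab lk by simp
          then show False using l out by auto
        qed
        then have "{ss ! i} \<inter> Vs ! l = {}" by simp
        moreover have "ss ! Suc l \<in> Vs ! l" using comp_basic[OF lk] by blast
        ultimately show ?thesis using comp_conn_s[OF lk gcomp[OF lk]] by blast
      qed
      show ?thesis by (rule concat) (use st False ab in auto)
    qed
    then show False using n by simp
  qed
next
  assume r: "a \<le> i \<and> i \<le> b"
  show "\<not> pw E (ss ! a) (ss ! b) {ss ! i}"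
  proof (cases "i = a \<or> i = b")
    case True
    then show ?thesis using pw_hd pw_last by metis
  next
    case False
    then have ai: "a < i" "i < b" using r by auto
    have "ss ! b \<in> Vs ! (b - 1)" using ss_Vs[of b] ab ai by simp
    moreover have "ss ! a \<in> Vs ! a" using ss_Vs2[of a] ab ai by simp
    ultimately show ?thesis using cut_sep[of i "ss ! a" a "ss ! b" "b - 1"] ai ab by simp
  qed
qed

end

locale sdec2 = sdec +
  assumes ns: "\<forall>i < length Vs. \<not> is_serial (Vs ! i) (Es ! i) (ss ! i) (ss ! Suc i)"
begin

lemma S_char: "(\<not> pw E s t {v}) = (\<exists>j\<le>k. v = ss ! j)"
proof
  assume n: "\<not> pw E s t {v}"
  show "\<exists>j\<le>k. v = ss ! j"
  proof (rule ccontr)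
    assume nv: "\<not> (\<exists>j\<le>k. v = ss ! j)"
    have st: "pw E (ss ! l) (ss ! Suc l) {v}" if l: "0 \<le> l" "l < k" for l
    proof (cases "v \<in> Vs ! l")
      case True
      have "v \<noteq> ss ! l" "v \<noteq> ss ! Suc l" using nv l by auto
      then have "pw (Es ! l) (ss ! l) (ss ! Suc l) {v}"
        using nonserial_avoid[OF comp[OF l(2)]] ns l by blast
      moreover have "ss ! l \<in> Vs ! l" using comp_basic[OF l(2)] by blast
      ultimately show ?thesis using comp_lift[OF l(2)] by blast
    next
      case False
      then have "{v} \<inter> Vs ! l = {}" by simp
      moreover have "ss ! Suc l \<in> Vs ! l" using comp_basic[OF l(2)] by blast
      ultimately show ?thesis using comp_conn_s[OF l(2) gcomp[OF l(2)]] by blast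
    qed
    have "pw E (ss ! 0) (ss ! k) {v}" by (rule concat) (use st kpos in auto)
    then show False using n ss0 ssk by simp
  qed
next
  assume "\<exists>j\<le>k. v = ss ! j"
  then obtain j where j: "j \<le> k" "v = ss ! j" by blast
  then show "\<not> pw E s t {v}" using sep_gen[of 0 k j] ss0 ssk by simp
qed

lemma Vs_char:
  assumes i: "i < k"
  shows "x \<in> Vs ! i \<longleftrightarrow> x \<in> V \<and> \<not> pw E s x {ss ! i} \<and> \<not> pw E t x {ss ! Suc i}"
proof
  assume x: "x \<in> Vs ! i"
  have "x \<in> V" using Vs_sub[OF i] x by blast
  moreover have "\<not> pw E s x {ss ! i}"
  proof (cases "i = 0")
    case True
    then show ?thesis using ss0 pw_hd by metis
  next
    case False
    have "s \<in> Vs ! 0" using ss_Vs2[of 0] kpos ss0 by simp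
    then show ?thesis using cut_sep[of i s 0 x i] False i x by simp
  qed
  moreover have "\<not> pw E t x {ss ! Suc i}"
  proof (cases "Suc i = k")
    case True
    then show ?thesis using ssk pw_hd by metis
  next
    case False
    have "t \<in> Vs ! (k - 1)" using ss_Vs[of k] kpos ssk by simp
    then have "\<not> pw E x t {ss ! Suc i}" using cut_sep[of "Suc i" x i t "k - 1"] False i x by simp
    then show ?thesis using pw_sym[of E t x "{ss ! Suc i}"] by blast
  qed
  ultimately show "x \<in> V \<and> \<not> pw E s x {ss ! i} \<and> \<not> pw E t x {ss ! Suc i}" by blast
next
  assume h: "x \<in> V \<and> \<not> pw E s x {ss ! i} \<and> \<not> pw E t x {ss ! Suc i}"
  obtain j where j: "j < k" "x \<in> Vs ! j" using h Vdef by auto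
  show "x \<in> Vs ! i"
  proof (rule ccontr)
    assume xi: "x \<notin> Vs ! i"
    have sii: "ss ! i \<in> Vs ! i" "ss ! Suc i \<in> Vs ! i" using comp_basic[OF i] by blast+
    have "j < i \<or> i < j" using xi j by (metis linorder_neqE_nat)
    then show False
    proof
      assume ji: "j < i"
      have p1: "pw E s (ss ! j) {ss ! i}"
      proof (cases "j = 0")
        case True
        then have "ss ! 0 \<noteq> ss ! i" using ss_neq[of 0 i] ji i by simp
        then show ?thesis using True ss0 pw_refl by (metis singletonD)
      next
        case False
        have st: "pw E (ss ! l) (ss ! Suc l) {ss ! i}" if l: "0 \<le> l" "l < j" for l
        proof -
          have lk: "l < k" using l j by simp
          have "ss ! i \<notin> Vs ! l"
          proof
            assume "ss ! i \<in> Vs ! l"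
            then have "l = i \<or> Suc l = i" using ss_in[of i l] i lk by simp
            then show False using l ji by auto
          qed
          then have "{ss ! i} \<inter> Vs ! l = {}" by simp
          moreover have "ss ! Suc l \<in> Vs ! l" using comp_basic[OF lk] by blast
          ultimately show ?thesis using comp_conn_s[OF lk gcomp[OF lk]] by blast
        qed
        have "pw E (ss ! 0) (ss ! j) {ss ! i}" by (rule concat) (use st False in auto)
        then show ?thesis using ss0 by simp
      qed
      have p2: "pw E (ss ! j) x {ss ! i}"
      proof (cases "Suc j = i")
        case True
        then have "x \<noteq> ss ! Suc j" using xi sii by auto
        then have "pw (Es ! j) (ss ! j) x {ss ! Suc j}" using gcomp_s j by blast
        moreover have "ss ! j \<in> Vs ! j" using comp_basic[OF j(1)] by blast
        ultimately show ?thesis using comp_lift[OF j(1)] True by blast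
      next
        case False
        have "ss ! i \<notin> Vs ! j"
        proof
          assume "ss ! i \<in> Vs ! j"
          then have "j = i \<or> Suc j = i" using ss_in[of i j] i j by simp
          then show False using False ji by auto
        qed
        then have "{ss ! i} \<inter> Vs ! j = {}" by simp
        then show ?thesis using comp_conn_s[OF j(1) gcomp[OF j(1)] j(2)] by blast
      qed
      show False using pw_trans[OF p1 p2] h by blast
    next
      assume ij: "i < j"
      have p1: "pw E t (ss ! Suc j) {ss ! Suc i}"
      proof (cases "Suc j = k")
        case True
        then have "ss ! k \<noteq> ss ! Suc i" using ss_neq[of k "Suc i"] ij i by simp
        then show ?thesis using True ssk pw_refl by (metis singletonD)
      next
        case False
        have st: "pw E (ss ! l) (ss ! Suc l) {ss ! Suc i}" if l: "Suc j \<le> l" "l < k" for l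
        proof -
          have "ss ! Suc i \<notin> Vs ! l"
          proof
            assume "ss ! Suc i \<in> Vs ! l"
            then have "l = Suc i \<or> Suc l = Suc i" using ss_in[of "Suc i" l] i l by simp
            then show False using l ij by auto
          qed
          then have "{ss ! Suc i} \<inter> Vs ! l = {}" by simp
          moreover have "ss ! Suc l \<in> Vs ! l" using comp_basic[OF l(2)] by blast
          ultimately show ?thesis using comp_conn_s[OF l(2) gcomp[OF l(2)]] by blast
        qed
        have "pw E (ss ! Suc j) (ss ! k) {ss ! Suc i}" by (rule concat) (use st False j in auto)
        then have "pw E (ss ! k) (ss ! Suc j) {ss ! Suc i}" by (rule pw_sym)
        then show ?thesis using ssk by simp
      qed
      have p2: "pw E (ss ! Suc j) x {ss ! Suc i}"
      proof (cases "j = Suc i")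
        case True
        then have "x \<noteq> ss ! j" using xi sii by auto
        then have "pw (Es ! j) (ss ! Suc j) x {ss ! j}" using gcomp_t j by blast
        moreover have "ss ! Suc j \<in> Vs ! j" using comp_basic[OF j(1)] by blast
        ultimately show ?thesis using comp_lift[OF j(1)] True by blast
      next
        case False
        have "ss ! Suc i \<notin> Vs ! j"
        proof
          assume "ss ! Suc i \<in> Vs ! j"
          then have "j = Suc i \<or> Suc j = Suc i" using ss_in[of "Suc i" j] i j by simp
          then show False using False ij by auto
        qed
        then have "{ss ! Suc i} \<inter> Vs ! j = {}" by simp
        then show ?thesis using comp_conn_t[OF j(1) gcomp[OF j(1)] j(2)] by blast
      qed
      show False using pw_trans[OF p1 p2] h by blast
    qed
  qed
qed

end


definition inv_aut :: "'a set \<Rightarrow> ('a \<Rightarrow> 'a) \<Rightarrow> 'a \<Rightarrow> 'a" where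
  "inv_aut V f = (\<lambda>x. if x \<in> V then inv_into V f x else x)"

lemma aut_bij: "graph_aut V E f \<Longrightarrow> bij_betw f V V"
  unfolding graph_aut_def graph_iso_def by blast

lemma aut_edge: "graph_aut V E f \<Longrightarrow> x \<in> V \<Longrightarrow> y \<in> V \<Longrightarrow> {x, y} \<in> E \<longleftrightarrow> {f x, f y} \<in> E"
  unfolding graph_aut_def graph_iso_def by blast

lemma aut_out: "graph_aut V E f \<Longrightarrow> x \<notin> V \<Longrightarrow> f x = x"
  unfolding graph_aut_def by blast

lemma aut_in: "graph_aut V E f \<Longrightarrow> x \<in> V \<Longrightarrow> f x \<in> V"
  using aut_bij bij_betwE by metis

lemma aut_inj: "graph_aut V E f \<Longrightarrow> x \<in> V \<Longrightarrow> y \<in> V \<Longrightarrow> f x = f y \<Longrightarrow> x = y"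
  using aut_bij bij_betw_imp_inj_on inj_onD by metis

lemma inv_aut_r: "graph_aut V E f \<Longrightarrow> x \<in> V \<Longrightarrow> f (inv_aut V f x) = x"
  unfolding inv_aut_def using aut_bij bij_betw_inv_into_right by fastforce

lemma inv_aut_l: "graph_aut V E f \<Longrightarrow> x \<in> V \<Longrightarrow> inv_aut V f (f x) = x"
  unfolding inv_aut_def using aut_bij aut_in bij_betw_inv_into_left by fastforce

lemma inv_aut_aut: "graph_aut V E f \<Longrightarrow> graph_aut V E (inv_aut V f)"
proof -
  assume f: "graph_aut V E f"
  have b: "bij_betw (inv_into V f) V V" using bij_betw_inv_into[OF aut_bij[OF f]] .
  have "bij_betw (inv_aut V f) V V" using b bij_betw_cong[of V "inv_aut V f" "inv_into V f" V]
    unfolding inv_aut_def by simp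
  moreover have gin: "inv_aut V f x \<in> V" if "x \<in> V" for x
    using calculation that bij_betwE by metis
  moreover have "{x, y} \<in> E \<longleftrightarrow> {inv_aut V f x, inv_aut V f y} \<in> E" if xy: "x \<in> V" "y \<in> V" for x y
  proof -
    have "{inv_aut V f x, inv_aut V f y} \<in> E \<longleftrightarrow> {f (inv_aut V f x), f (inv_aut V f y)} \<in> E"
      using aut_edge[OF f gin[OF xy(1)] gin[OF xy(2)]] .
    also have "\<dots> \<longleftrightarrow> {x, y} \<in> E" using inv_aut_r[OF f] xy by simp
    finally show ?thesis by simp
  qed
  moreover have "\<forall>x. x \<notin> V \<longrightarrow> inv_aut V f x = x" unfolding inv_aut_def by simp
  ultimately show ?thesis unfolding graph_aut_def graph_iso_def by blast
qed

lemma aut_comp: "graph_aut V E f \<Longrightarrow> graph_aut V E g \<Longrightarrow> graph_aut V E (f \<circ> g)"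
proof -
  assume f: "graph_aut V E f" and g: "graph_aut V E g"
  have "bij_betw (f \<circ> g) V V" using bij_betw_trans[OF aut_bij[OF g] aut_bij[OF f]] .
  moreover have "{x, y} \<in> E \<longleftrightarrow> {(f \<circ> g) x, (f \<circ> g) y} \<in> E" if xy: "x \<in> V" "y \<in> V" for x y
    using aut_edge[OF g xy] aut_edge[OF f aut_in[OF g xy(1)] aut_in[OF g xy(2)]] by simp
  moreover have "\<forall>x. x \<notin> V \<longrightarrow> (f \<circ> g) x = x" using aut_out[OF f] aut_out[OF g] by simp
  ultimately show ?thesis unfolding graph_aut_def graph_iso_def by blast
qed

lemma pw_aut:
  assumes f: "graph_aut V E f" and ed: "\<forall>e\<in>E. e \<subseteq> V" and a: "a \<in> V" and pw: "pw E a b {v}"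
  shows "pw E (f a) (f b) {f v}"
proof -
  obtain p where p: "walk E p" "hd p = a" "last p = b" "v \<notin> set p"
    using pw unfolding pw_def by blast
  have ne: "p \<noteq> []" using p walk_nonempty by auto
  have sp: "set p \<subseteq> V" using walk_in[OF ed p(1)] p a by simp
  have w: "walk E (map f p)"
    by (rule walk_map[OF _ p(1) sp]) (use aut_edge[OF f] in blast)
  have "f v \<notin> set (map f p)"
  proof
    assume "f v \<in> set (map f p)"
    then obtain w where w: "w \<in> set p" "f w = f v" by auto
    show False
    proof (cases "v \<in> V")
      case True
      then have "w = v" using aut_inj[OF f] w sp by blast
      then show False using w p by simp
    next
      case False
      then have "f w = v" using w aut_out[OF f] by simp
      moreover have "f w \<in> V" using aut_in[OF f] w sp by blast
      ultimately show False using False by simp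
    qed
  qed
  moreover have "hd (map f p) = f a" "last (map f p) = f b" using ne p by (simp_all add: hd_map last_map)
  ultimately show ?thesis using w unfolding pw_def by auto
qed

lemma sep_aut:
  assumes f: "graph_aut V E f" and ed: "\<forall>e\<in>E. e \<subseteq> V" and v: "a \<in> V" "b \<in> V" "v \<in> V"
    and n: "\<not> pw E a b {v}"
  shows "\<not> pw E (f a) (f b) {f v}"
proof
  assume "pw E (f a) (f b) {f v}"
  then have "pw E (inv_aut V f (f a)) (inv_aut V f (f b)) {inv_aut V f (f v)}"
    using pw_aut[OF inv_aut_aut[OF f] ed aut_in[OF f v(1)]] by blast
  then show False using n inv_aut_l[OF f] v by simp
qed

lemma nsep_sym: "\<not> pw E a b X \<Longrightarrow> \<not> pw E b a X"
  using pw_sym[of E b a X] by blast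

context sdec
begin

lemma ss_V: "j \<le> k \<Longrightarrow> ss ! j \<in> V"
proof -
  assume j: "j \<le> k"
  show ?thesis
  proof (cases "j < k")
    case True
    then show ?thesis using ss_Vs2 Vs_sub by blast
  next
    case False
    then have "j = k" using j by simp
    then show ?thesis using ss_Vs[of k] kpos Vs_sub[of "k - 1"] by auto
  qed
qed

lemma edge_iff: "i < k \<Longrightarrow> x \<in> Vs ! i \<Longrightarrow> y \<in> Vs ! i \<Longrightarrow> {x, y} \<in> Es ! i \<longleftrightarrow> {x, y} \<in> E"
proof
  assume "i < k" "{x, y} \<in> Es ! i"
  then show "{x, y} \<in> E" using Es_sub by blast
next
  assume a: "i < k" "x \<in> Vs ! i" "y \<in> Vs ! i" "{x, y} \<in> E"
  obtain m where m: "m < k" "{x, y} \<in> Es ! m" "x \<in> Vs ! m" "y \<in> Vs ! m" "x \<noteq> y"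
    using edge_comp[OF a(4)] by blast
  show "{x, y} \<in> Es ! i"
  proof (cases "m = i")
    case True
    then show ?thesis using m by simp
  next
    case False
    then have "m < i \<or> i < m" by arith
    then have "x = y"
    proof
      assume "m < i"
      then show "x = y" using inter2[of x m i] inter2[of y m i] a m by simp
    next
      assume "i < m"
      then show "x = y" using inter2[of x i m] inter2[of y i m] a m by simp
    qed
    then show ?thesis using m by simp
  qed
qed

lemma rf_aut:
  assumes rf: "reversal_family Vs Es ss rs"
    and r1: "\<forall>i < k. \<forall>x \<in> Vs ! i. r x = (rs ! i) x" and r2: "\<forall>x. x \<notin> V \<longrightarrow> r x = x"
  shows "graph_aut V E r \<and> r s = t \<and> r t = s"
proof -
  have iso: "graph_iso (Vs ! i) (Es ! i) (Vs ! (k - 1 - i)) (Es ! (k - 1 - i)) (rs ! i)"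
    and t1: "(rs ! i) (ss ! i) = ss ! (k - i)"
    and t2: "(rs ! i) (ss ! Suc i) = ss ! (k - 1 - i)" if "i < k" for i
    using rf that unfolding reversal_family_def by blast+
  have bij: "bij_betw (rs ! i) (Vs ! i) (Vs ! (k - 1 - i))" if "i < k" for i
    using iso[OF that] unfolding graph_iso_def by blast
  have img: "r ` V = V"
  proof
    show "r ` V \<subseteq> V"
    proof
      fix y assume "y \<in> r ` V"
      then obtain x where x: "x \<in> V" "y = r x" by blast
      then obtain i where i: "i < k" "x \<in> Vs ! i" using Vdef by auto
      have "(rs ! i) x \<in> Vs ! (k - 1 - i)" using bij[OF i(1)] i bij_betwE by metis
      moreover have "k - 1 - i < k" using i by simp
      ultimately have "(rs ! i) x \<in> V" using Vs_sub by blast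
      then show "y \<in> V" using x i r1 by simp
    qed
  next
    show "V \<subseteq> r ` V"
    proof
      fix y assume "y \<in> V"
      then obtain j where j: "j < k" "y \<in> Vs ! j" using Vdef by auto
      define i where "i = k - 1 - j"
      have i: "i < k" "k - 1 - i = j" using j unfolding i_def by auto
      then have "y \<in> (rs ! i) ` (Vs ! i)" using bij[OF i(1)] j bij_betw_imp_surj_on by metis
      then obtain x where x: "x \<in> Vs ! i" "y = (rs ! i) x" by blast
      then have "y = r x" using r1 i by simp
      moreover have "x \<in> V" using x Vs_sub i by blast
      ultimately show "y \<in> r ` V" by blast
    qed
  qed
  have inj: "inj_on r V" by (rule eq_card_imp_inj_on[OF finV]) (simp add: img)
  have bV: "bij_betw r V V" using inj img unfolding bij_betw_def by blast
  have ed: "{x, y} \<in> E \<longleftrightarrow> {r x, r y} \<in> E" if xy: "x \<in> V" "y \<in> V" for x y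
  proof
    assume "{x, y} \<in> E"
    then obtain m where m: "m < k" "{x, y} \<in> Es ! m" "x \<in> Vs ! m" "y \<in> Vs ! m"
      using edge_comp by blast
    then have "{(rs ! m) x, (rs ! m) y} \<in> Es ! (k - 1 - m)" using iso[OF m(1)] unfolding graph_iso_def by blast
    moreover have "k - 1 - m < k" using m(1) by simp
    ultimately have "{(rs ! m) x, (rs ! m) y} \<in> E" using Es_sub by blast
    then show "{r x, r y} \<in> E" using r1 m by simp
  next
    assume "{r x, r y} \<in> E"
    then obtain m where m: "m < k" "{r x, r y} \<in> Es ! m" "r x \<in> Vs ! m" "r y \<in> Vs ! m"
      using edge_comp by blast
    define i where "i = k - 1 - m"
    have i: "i < k" "k - 1 - i = m" using m unfolding i_def by auto
    have "r x \<in> (rs ! i) ` (Vs ! i)" "r y \<in> (rs ! i) ` (Vs ! i)"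
      using bij[OF i(1)] i m bij_betw_imp_surj_on by metis+
    then obtain x' y' where x': "x' \<in> Vs ! i" "r x = (rs ! i) x'" and y': "y' \<in> Vs ! i" "r y = (rs ! i) y'"
      by blast
    have "{(rs ! i) x', (rs ! i) y'} \<in> Es ! (k - 1 - i)" using m x' y' i by simp
    then have "{x', y'} \<in> Es ! i" using iso[OF i(1)] x' y' unfolding graph_iso_def by blast
    then have e: "{x', y'} \<in> E" using Es_sub[OF i(1)] by blast
    have "r x' = r x" "r y' = r y" using r1 i x' y' by auto
    moreover have "x' \<in> V" "y' \<in> V" using x' y' Vs_sub[OF i(1)] by blast+
    ultimately have "x' = x" "y' = y" using inj xy inj_onD by metis+
    then show "{x, y} \<in> E" using e by simp
  qed
  have ga: "graph_aut V E r" unfolding graph_aut_def graph_iso_def using bV ed r2 by blast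
  have "r s = t"
  proof -
    have "s \<in> Vs ! 0" using ss_Vs2[OF kpos] ss0 by simp
    then have "r s = (rs ! 0) (ss ! 0)" using r1 kpos ss0 by simp
    then show ?thesis using t1[OF kpos] ssk by simp
  qed
  moreover have "r t = s"
  proof -
    have km: "k - 1 < k" "Suc (k - 1) = k" using kpos by auto
    have "t \<in> Vs ! (k - 1)" using ss_Vs[of k] kpos ssk by simp
    then have "r t = (rs ! (k - 1)) (ss ! Suc (k - 1))" using r1 km ssk by simp
    then show ?thesis using t2[OF km(1)] ss0 by simp
  qed
  ultimately show ?thesis using ga by blast
qed

end


context sdec2
begin

lemma swap_ss:
  assumes f: "graph_aut V E f" and fs: "f s = t" and ft: "f t = s" and j: "j \<le> k"
  shows "f (ss ! j) = ss ! (k - j)"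
proof -
  have sV: "s \<in> V" "t \<in> V" using ss_V[of 0] ss_V[of k] ss0 ssk by auto
  have mex: "\<forall>j. \<exists>mm. j \<le> k \<longrightarrow> mm \<le> k \<and> f (ss ! j) = ss ! mm"
  proof
    fix j
    show "\<exists>mm. j \<le> k \<longrightarrow> mm \<le> k \<and> f (ss ! j) = ss ! mm"
    proof (cases "j \<le> k")
      case True
      have "\<not> pw E s t {ss ! j}" using S_char True by blast
      then have "\<not> pw E (f s) (f t) {f (ss ! j)}" using sep_aut[OF f edges sV ss_V[OF True]] by blast
      then have "\<not> pw E t s {f (ss ! j)}" using fs ft by simp
      then have "\<not> pw E s t {f (ss ! j)}" by (rule nsep_sym)
      then show ?thesis using S_char by blast
    next
      case False
      then show ?thesis by blast
    qed
  qed
  obtain m where m: "\<forall>j. j \<le> k \<longrightarrow> m j \<le> k \<and> f (ss ! j) = ss ! m j"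
    using choice[OF mex] by (elim exE) blast
  have a1: "m i \<le> m j" if ji: "j \<le> i" "i \<le> k" for i j
  proof -
    have "\<not> pw E (ss ! j) (ss ! k) {ss ! i}" using sep_gen[of j k i] ji by simp
    then have "\<not> pw E (f (ss ! j)) (f (ss ! k)) {f (ss ! i)}"
      using sep_aut[OF f edges ss_V ss_V ss_V] ji by simp
    then have "\<not> pw E (ss ! m j) (ss ! 0) {ss ! m i}" using m ji ssk ss0 ft by simp
    then have "\<not> pw E (ss ! 0) (ss ! m j) {ss ! m i}" by (rule nsep_sym)
    then show ?thesis using sep_gen[of 0 "m j" "m i"] m ji by simp
  qed
  have a2: "m j \<le> m i" if ji: "i \<le> j" "j \<le> k" for i j
  proof -
    have "\<not> pw E (ss ! 0) (ss ! j) {ss ! i}" using sep_gen[of 0 j i] ji by simp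
    then have "\<not> pw E (f (ss ! 0)) (f (ss ! j)) {f (ss ! i)}"
      using sep_aut[OF f edges ss_V ss_V ss_V] ji by simp
    then have "\<not> pw E (ss ! k) (ss ! m j) {ss ! m i}" using m ji ssk ss0 fs by simp
    then have "\<not> pw E (ss ! m j) (ss ! k) {ss ! m i}" by (rule nsep_sym)
    then show ?thesis using sep_gen[of "m j" k "m i"] m ji by simp
  qed
  have inj: "inj_on m {..k}"
  proof (rule inj_onI)
    fix a b assume ab: "a \<in> {..k}" "b \<in> {..k}" "m a = m b"
    then have "f (ss ! a) = f (ss ! b)" using m by simp
    then have "ss ! a = ss ! b" using aut_inj[OF f ss_V ss_V] ab by simp
    then show "a = b" using ss_neq ab by fastforce
  qed
  have c1: "m ` {j..k} \<subseteq> {..m j}" using a1 j by auto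
  have "card {j..k} \<le> card {..m j}"
    by (rule card_inj_on_le[OF inj_on_subset[OF inj] c1]) auto
  then have l1: "k - j \<le> m j" by simp
  have c2: "m ` {..j} \<subseteq> {m j..k}" using a2 j m by auto
  have "card {..j} \<le> card {m j..k}"
    by (rule card_inj_on_le[OF inj_on_subset[OF inj] c2]) (use j in auto)
  then have l2: "m j \<le> k - j" using m j by simp
  show ?thesis using l1 l2 m j by simp
qed

lemma swap_Vs:
  assumes f: "graph_aut V E f" and fs: "f s = t" and ft: "f t = s" and i: "i < k" and x: "x \<in> Vs ! i"
  shows "f x \<in> Vs ! (k - 1 - i)"
proof -
  have sV: "s \<in> V" "t \<in> V" using ss_V[of 0] ss_V[of k] ss0 ssk by auto
  have h: "x \<in> V" "\<not> pw E s x {ss ! i}" "\<not> pw E t x {ss ! Suc i}" using Vs_char[OF i] x by blast+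
  define i' where "i' = k - 1 - i"
  have i1: "i' < k" "Suc i' = k - i" "k - Suc i = i'" using i unfolding i'_def by auto
  have ik: "i \<le> k" "Suc i \<le> k" using i by auto
  have "\<not> pw E (f s) (f x) {f (ss ! i)}" using sep_aut[OF f edges sV(1) h(1) ss_V[OF ik(1)] h(2)] .
  moreover have "f (ss ! i) = ss ! Suc i'" using swap_ss[OF f fs ft ik(1)] i1(2) by simp
  ultimately have n1: "\<not> pw E t (f x) {ss ! Suc i'}" using fs by simp
  have "\<not> pw E (f t) (f x) {f (ss ! Suc i)}" using sep_aut[OF f edges sV(2) h(1) ss_V[OF ik(2)] h(3)] .
  moreover have "f (ss ! Suc i) = ss ! i'" using swap_ss[OF f fs ft ik(2)] i1(3) by simp
  ultimately have n2: "\<not> pw E s (f x) {ss ! i'}" using ft by simp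
  have "f x \<in> V" using aut_in[OF f h(1)] .
  then have "f x \<in> Vs ! i'" using Vs_char[OF i1(1)] n1 n2 by blast
  then show ?thesis unfolding i'_def .
qed

lemma swap_rf:
  assumes f: "graph_aut V E f" and fs: "f s = t" and ft: "f t = s"
  shows "reversal_family Vs Es ss (replicate k f)"
proof -
  have sV: "s \<in> V" "t \<in> V" using ss_V[of 0] ss_V[of k] ss0 ssk by auto
  define g where "g = inv_aut V f"
  have g: "graph_aut V E g" "g s = t" "g t = s"
    using inv_aut_aut[OF f] inv_aut_l[OF f sV(1)] inv_aut_l[OF f sV(2)] fs ft unfolding g_def by auto
  have iso: "graph_iso (Vs ! i) (Es ! i) (Vs ! (k - 1 - i)) (Es ! (k - 1 - i)) f" if i: "i < k" for i
  proof -
    have i1: "k - 1 - i < k" "k - 1 - (k - 1 - i) = i" using i by auto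
    have inj: "inj_on f (Vs ! i)"
      using inj_on_subset[OF bij_betw_imp_inj_on[OF aut_bij[OF f]] Vs_sub[OF i]] .
    have "f ` (Vs ! i) = Vs ! (k - 1 - i)"
    proof
      show "f ` (Vs ! i) \<subseteq> Vs ! (k - 1 - i)" using swap_Vs[OF f fs ft i] by blast
    next
      show "Vs ! (k - 1 - i) \<subseteq> f ` (Vs ! i)"
      proof
        fix y assume y: "y \<in> Vs ! (k - 1 - i)"
        then have "g y \<in> Vs ! i" using swap_Vs[OF g i1(1) y] i1 by simp
        moreover have "f (g y) = y" using inv_aut_r[OF f] y Vs_sub[OF i1(1)] unfolding g_def by blast
        ultimately show "y \<in> f ` (Vs ! i)" by (metis image_eqI)
      qed
    qed
    then have b: "bij_betw f (Vs ! i) (Vs ! (k - 1 - i))" using inj unfolding bij_betw_def by blast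
    have "{x, y} \<in> Es ! i \<longleftrightarrow> {f x, f y} \<in> Es ! (k - 1 - i)" if xy: "x \<in> Vs ! i" "y \<in> Vs ! i" for x y
    proof -
      have fxy: "f x \<in> Vs ! (k - 1 - i)" "f y \<in> Vs ! (k - 1 - i)" using swap_Vs[OF f fs ft i] xy by blast+
      have "{x, y} \<in> Es ! i \<longleftrightarrow> {x, y} \<in> E" using edge_iff[OF i xy] .
      also have "\<dots> \<longleftrightarrow> {f x, f y} \<in> E" using aut_edge[OF f] xy Vs_sub[OF i] by blast
      also have "\<dots> \<longleftrightarrow> {f x, f y} \<in> Es ! (k - 1 - i)" using edge_iff[OF i1(1) fxy] by simp
      finally show ?thesis .
    qed
    then show ?thesis using b unfolding graph_iso_def by blast
  qed
  show ?thesis unfolding reversal_family_def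
  proof (intro conjI allI impI)
    show "length (replicate k f) = k" by simp
  next
    fix i assume i: "i < k"
    show "graph_iso (Vs ! i) (Es ! i) (Vs ! (k - 1 - i)) (Es ! (k - 1 - i)) (replicate k f ! i)"
      using iso[OF i] i by simp
    show "(replicate k f ! i) (ss ! i) = ss ! (k - i)" using swap_ss[OF f fs ft, of i] i by simp
    have "f (ss ! Suc i) = ss ! (k - Suc i)" using swap_ss[OF f fs ft, of "Suc i"] i by simp
    then show "(replicate k f ! i) (ss ! Suc i) = ss ! (k - 1 - i)" using i by simp
  qed
qed

end


theorem theorem6p4:
  fixes V :: "'a set" and E :: "'a set set" and s t :: 'a
    and Vs :: "'a set list" and Es :: "'a set set list" and ss :: "'a list"
  assumes decomp: "serial_decomp V E s t Vs Es ss"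
    and nonserial: "\<forall>i < length Vs. \<not> is_serial (Vs ! i) (Es ! i) (ss ! i) (ss ! Suc i)"
  shows "(\<forall>rs r. reversal_family Vs Es ss rs
              \<and> (\<forall>i < length Vs. \<forall>x \<in> Vs ! i. r x = (rs ! i) x)
              \<and> (\<forall>x. x \<notin> V \<longrightarrow> r x = x)
            \<longrightarrow> Aut_semi V E s t = Aut_or V E s t \<union> (\<lambda>\<sigma>. r \<circ> \<sigma>) ` Aut_or V E s t)
       \<and> ((\<nexists>rs. reversal_family Vs Es ss rs) \<longrightarrow> Aut_semi V E s t = Aut_or V E s t)"
proof -
  interpret sdec2 V E s t Vs Es ss
    by (intro sdec2.intro sdec.intro sdec2_axioms.intro decomp nonserial)
  have sV: "s \<in> V" "t \<in> V" using ss_V[of 0] ss_V[of k] ss0 ssk by auto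
  have or_semi: "Aut_or V E s t \<subseteq> Aut_semi V E s t"
    unfolding Aut_or_def Aut_semi_def by auto
  have cases: "\<sigma> \<in> Aut_or V E s t \<or> (graph_aut V E \<sigma> \<and> \<sigma> s = t \<and> \<sigma> t = s)"
    if "\<sigma> \<in> Aut_semi V E s t" for \<sigma>
  proof -
    have a: "graph_aut V E \<sigma>" "{\<sigma> s, \<sigma> t} = {s, t}" using that unfolding Aut_semi_def by auto
    have "\<sigma> s \<noteq> \<sigma> t" using aut_inj[OF a(1) sV] st by blast
    then have "(\<sigma> s = s \<and> \<sigma> t = t) \<or> (\<sigma> s = t \<and> \<sigma> t = s)" using a(2) st by (auto simp: doubleton_eq_iff)
    then show ?thesis using a(1) unfolding Aut_or_def by auto
  qed
  have P1: "Aut_semi V E s t = Aut_or V E s t \<union> (\<lambda>\<sigma>. r \<circ> \<sigma>) ` Aut_or V E s t"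
    if h: "reversal_family Vs Es ss rs" "\<forall>i < length Vs. \<forall>x \<in> Vs ! i. r x = (rs ! i) x"
      "\<forall>x. x \<notin> V \<longrightarrow> r x = x" for rs r
  proof -
    have r: "graph_aut V E r" "r s = t" "r t = s" using rf_aut[OF h] by blast+
    show ?thesis
    proof
      show "Aut_semi V E s t \<subseteq> Aut_or V E s t \<union> (\<lambda>\<sigma>. r \<circ> \<sigma>) ` Aut_or V E s t"
      proof
        fix \<sigma> assume "\<sigma> \<in> Aut_semi V E s t"
        then have c: "\<sigma> \<in> Aut_or V E s t \<or> (graph_aut V E \<sigma> \<and> \<sigma> s = t \<and> \<sigma> t = s)" by (rule cases)
        show "\<sigma> \<in> Aut_or V E s t \<union> (\<lambda>\<sigma>. r \<circ> \<sigma>) ` Aut_or V E s t"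
        proof (cases "\<sigma> \<in> Aut_or V E s t")
          case True
          then show ?thesis by blast
        next
          case False
          then have sg: "graph_aut V E \<sigma>" "\<sigma> s = t" "\<sigma> t = s" using c by blast+
          define \<rho> where "\<rho> = inv_aut V r \<circ> \<sigma>"
          have ga: "graph_aut V E \<rho>" unfolding \<rho>_def by (rule aut_comp[OF inv_aut_aut[OF r(1)] sg(1)])
          have "\<rho> s = s" unfolding \<rho>_def using sg(2) inv_aut_l[OF r(1) sV(1)] r(2) by simp
          moreover have "\<rho> t = t" unfolding \<rho>_def using sg(3) inv_aut_l[OF r(1) sV(2)] r(3) by simp
          ultimately have ro: "\<rho> \<in> Aut_or V E s t" using ga unfolding Aut_or_def by blast
          have "r \<circ> \<rho> = \<sigma>"
          proof
            fix x
            show "(r \<circ> \<rho>) x = \<sigma> x"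
            proof (cases "x \<in> V")
              case True
              then have "\<sigma> x \<in> V" using aut_in[OF sg(1)] by blast
              then show ?thesis unfolding \<rho>_def using inv_aut_r[OF r(1)] by simp
            next
              case False
              then have "\<sigma> x = x" using aut_out[OF sg(1)] by blast
              moreover have "inv_aut V r x = x" using False unfolding inv_aut_def by simp
              ultimately show ?thesis unfolding \<rho>_def using aut_out[OF r(1) False] by simp
            qed
          qed
          then show ?thesis using ro by blast
        qed
      qed
    next
      show "Aut_or V E s t \<union> (\<lambda>\<sigma>. r \<circ> \<sigma>) ` Aut_or V E s t \<subseteq> Aut_semi V E s t"
      proof
        fix \<tau> assume "\<tau> \<in> Aut_or V E s t \<union> (\<lambda>\<sigma>. r \<circ> \<sigma>) ` Aut_or V E s t"
        then show "\<tau> \<in> Aut_semi V E s t"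
        proof
          assume "\<tau> \<in> Aut_or V E s t"
          then show ?thesis using or_semi by blast
        next
          assume "\<tau> \<in> (\<lambda>\<sigma>. r \<circ> \<sigma>) ` Aut_or V E s t"
          then obtain \<sigma> where \<sigma>: "\<sigma> \<in> Aut_or V E s t" "\<tau> = r \<circ> \<sigma>" by blast
          then have sg: "graph_aut V E \<sigma>" "\<sigma> s = s" "\<sigma> t = t" unfolding Aut_or_def by blast+
          have "graph_aut V E \<tau>" using aut_comp[OF r(1) sg(1)] \<sigma>(2) by simp
          moreover have "{\<tau> s, \<tau> t} = {s, t}" using \<sigma>(2) sg r by auto
          ultimately show ?thesis unfolding Aut_semi_def by blast
        qed
      qed
    qed
  qed
  have P2: "Aut_semi V E s t = Aut_or V E s t" if nrf: "\<nexists>rs. reversal_family Vs Es ss rs"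
  proof
    show "Aut_semi V E s t \<subseteq> Aut_or V E s t"
    proof
      fix \<sigma> assume "\<sigma> \<in> Aut_semi V E s t"
      then have c: "\<sigma> \<in> Aut_or V E s t \<or> (graph_aut V E \<sigma> \<and> \<sigma> s = t \<and> \<sigma> t = s)" by (rule cases)
      show "\<sigma> \<in> Aut_or V E s t"
      proof (rule ccontr)
        assume "\<sigma> \<notin> Aut_or V E s t"
        then have sg: "graph_aut V E \<sigma>" "\<sigma> s = t" "\<sigma> t = s" using c by blast+
        have "reversal_family Vs Es ss (replicate k \<sigma>)" by (rule swap_rf[OF sg])
        then show False using nrf by blast
      qed
    qed
  next
    show "Aut_or V E s t \<subseteq> Aut_semi V E s t" by (rule or_semi)
  qed
  show ?thesis using P1 P2 by blast
qed

end
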